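(* Let $(\mathcal{M},\mathrm{dist})$ be a metric space, $\mathcal{F}\subset2^{\mathcal{M}}$, and $J:\mathcal{M}\to\mathbb{R}\cup\{+\infty\}$ lower semi-continuous, with $c=\inf_{A\in\mathcal{F}}\sup_{x\in A}J(x)\in\mathbb{R}$. Assume (F1) every $A\in\mathcal{F}$ is closed in $\mathcal{M}$, and (F2) there is $c'>c$ such that for every sequence $(A_n)\subset\mathcal{F}$ with $A_n\subset\mathcal{M}^{c'}$ for all $n$, $\limsup_nA_n\in\mathcal{F}$. Let $\eta:\mathcal{M}^{c'}\to\mathcal{M}^{c'}$ satisfy ($\eta$1) $\eta(A)\in\mathcal{F}$ whenever $A\in\mathcal{F}$ and $A\subset\mathcal{M}^{c'}$, and ($\eta$2) $J(\eta(x))\le J(x)$ for all $x\in\mathcal{M}^{c'}$. Suppose $(J,\eta)$ satisfies $(PS)_c$. Then for every $A\in\mathcal{F}$ with $\sup_AJ=c$ there exists $\bar x\in A\cap\mathcal{K}_c$; in particular $\mathcal{K}_c\neq\emptyset$.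
   Context: $\mathcal{M}^{c'}=\{x\in\mathcal{M}:J(x)\le c'\}$. For sets $A_n\subset\mathcal{M}$, $\limsup_nA_n$ is the set of $x$ such that for some $n_j\to\infty$ there are $x_{n_j}\in A_{n_j}$ with $x_{n_j}\to x$. $\mathcal{K}_c=\{x\in\mathcal{M}:J(x)=J(\eta(x))=c\}$. $(J,\eta)$ satisfies $(PS)_c$ if for every sequence $(x_n)\subset\mathcal{M}$ with $J(x_n)\to c$ and $J(\eta(x_n))\to c$ (so $\eta(x_n)$ is defined for $n$ large) there is $\bar x\in\mathcal{K}_c$ such that, up to a subsequence, $x_n\to\bar x$. *)

theory Defs
  imports "HOL-Analysis.Analysis" "HOL-Library.Extended_Real"
begin

definition lsc_ereal :: "('a::topological_space \<Rightarrow> ereal) \<Rightarrow> bool" where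
  "lsc_ereal J \<longleftrightarrow> (\<forall>t::ereal. closed {x. J x \<le> t})"

definition sublevel :: "('a \<Rightarrow> ereal) \<Rightarrow> real \<Rightarrow> 'a set" where
  "sublevel J c' = {x. J x \<le> ereal c'}"

definition seq_limsup_set :: "(nat \<Rightarrow> 'a::topological_space set) \<Rightarrow> 'a set" where
  "seq_limsup_set A = {x. \<exists>r xs. strict_mono r \<and> (\<forall>j. xs j \<in> A (r j)) \<and> xs \<longlonglongrightarrow> x}"

definition crit_set :: "('a \<Rightarrow> ereal) \<Rightarrow> ('a \<Rightarrow> 'a) \<Rightarrow> real \<Rightarrow> 'a set" where
  "crit_set J \<eta> c = {x. J x = ereal c \<and> J (\<eta> x) = ereal c}"

definition PS_cond :: "('a::metric_space \<Rightarrow> ereal) \<Rightarrow> ('a \<Rightarrow> 'a) \<Rightarrow> real \<Rightarrow> bool" where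
  "PS_cond J \<eta> c \<longleftrightarrow>
     (\<forall>xs::nat \<Rightarrow> 'a. (\<lambda>n. J (xs n)) \<longlonglongrightarrow> ereal c \<and> (\<lambda>n. J (\<eta> (xs n))) \<longlonglongrightarrow> ereal c \<longrightarrow>
        (\<exists>xbar \<in> crit_set J \<eta> c. \<exists>r. strict_mono r \<and> (xs \<circ> r) \<longlonglongrightarrow> xbar))"

end

theory Submission
  imports Defs
begin

theorem theorem2p4:
  fixes J :: "'a::metric_space \<Rightarrow> ereal"
    and \<F> :: "'a set set"
    and \<eta> :: "'a \<Rightarrow> 'a"
    and c c' :: real
  assumes J_not_minf: "\<And>x. J x \<noteq> -\<infinity>"
    and J_lsc: "lsc_ereal J"
    and c_def: "(INF A\<in>\<F>. SUP x\<in>A. J x) = ereal c"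
    and F1: "\<And>A. A \<in> \<F> \<Longrightarrow> closed A"
    and c'_gt: "c' > c"
    and F2: "\<And>A. (\<And>n. A n \<in> \<F>) \<Longrightarrow> (\<And>n. A n \<subseteq> sublevel J c') \<Longrightarrow> seq_limsup_set A \<in> \<F>"
    and eta_maps: "\<And>x. x \<in> sublevel J c' \<Longrightarrow> \<eta> x \<in> sublevel J c'"
    and eta1: "\<And>A. A \<in> \<F> \<Longrightarrow> A \<subseteq> sublevel J c' \<Longrightarrow> \<eta> ` A \<in> \<F>"
    and eta2: "\<And>x. x \<in> sublevel J c' \<Longrightarrow> J (\<eta> x) \<le> J x"
    and PS: "PS_cond J \<eta> c"
  shows "(\<forall>A\<in>\<F>. (SUP x\<in>A. J x) = ereal c \<longrightarrow> A \<inter> crit_set J \<eta> c \<noteq> {})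
         \<and> crit_set J \<eta> c \<noteq> {}"
proof -
  have geF: "ereal c \<le> (SUP x\<in>B. J x)" if "B \<in> \<F>" for B
    using c_def that by (metis INF_lower)
  have part1: "A \<inter> crit_set J \<eta> c \<noteq> {}" if A: "A \<in> \<F>" "(SUP x\<in>A. J x) = ereal c" for A
  proof -
    have leA: "J x \<le> ereal c" if "x \<in> A" for x
      using A(2) that by (metis SUP_upper)
    have subA: "A \<subseteq> sublevel J c'"
      using leA c'_gt unfolding sublevel_def by (force intro: order_trans[of _ "ereal c"])
    have etaA: "\<eta> ` A \<in> \<F>" using eta1 A(1) subA by blast
    have ex: "\<exists>x\<in>A. ereal (c - 1 / real (Suc n)) < J (\<eta> x)" for n
    proof -
      have "ereal (c - 1 / real (Suc n)) < ereal c" by simp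
      also have "\<dots> \<le> (SUP y\<in>\<eta> ` A. J y)" using geF[OF etaA] .
      finally show ?thesis by (simp add: less_SUP_iff)
    qed
    then obtain xs where xs: "\<And>n. xs n \<in> A" "\<And>n. ereal (c - 1 / real (Suc n)) < J (\<eta> (xs n))"
      by metis
    have low: "(\<lambda>n. ereal (c - 1 / real (Suc n))) \<longlonglongrightarrow> ereal c"
    proof (intro tendsto_ereal)
      have "(\<lambda>n. c - inverse (real (Suc n))) \<longlonglongrightarrow> c - 0"
        by (intro tendsto_intros LIMSEQ_inverse_real_of_nat)
      then show "(\<lambda>n. c - 1 / real (Suc n)) \<longlonglongrightarrow> c" by (simp add: divide_inverse)
    qed
    have bnd1: "ereal (c - 1 / real (Suc n)) \<le> J (\<eta> (xs n))" for n using xs(2)[of n] by simp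
    have bnd2: "J (\<eta> (xs n)) \<le> ereal c" for n
      using eta2[of "xs n"] subA xs(1)[of n] leA[of "xs n"] by auto
    have bnd3: "ereal (c - 1 / real (Suc n)) \<le> J (xs n)" for n
      using bnd1[of n] eta2[of "xs n"] subA xs(1)[of n] by (auto intro: order_trans)
    have t1: "(\<lambda>n. J (\<eta> (xs n))) \<longlonglongrightarrow> ereal c"
      by (rule tendsto_sandwich[OF _ _ low tendsto_const]) (use bnd1 bnd2 in auto)
    have t2: "(\<lambda>n. J (xs n)) \<longlonglongrightarrow> ereal c"
      by (rule tendsto_sandwich[OF _ _ low tendsto_const]) (use bnd3 leA xs(1) in auto)
    from PS t1 t2 obtain xb r where xb: "xb \<in> crit_set J \<eta> c" "strict_mono r" "(xs \<circ> r) \<longlonglongrightarrow> xb"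
      unfolding PS_cond_def by blast
    have "xb \<in> A"
      using closed_sequentially[OF F1[OF A(1)], of "xs \<circ> r"] xs(1) xb(3) by auto
    then show ?thesis using xb(1) by blast
  qed
  define d where "d n = (c' - c) * inverse (real (Suc n))" for n
  have dpos: "d n > 0" for n using c'_gt by (simp add: d_def)
  have dle: "d n \<le> c' - c" for n
    using c'_gt by (simp add: d_def field_simps mult_right_mono)
  have dlim: "d \<longlonglongrightarrow> 0" unfolding d_def
    by (intro tendsto_mult_right_zero LIMSEQ_inverse_real_of_nat)
  have "\<exists>B\<in>\<F>. (SUP x\<in>B. J x) < ereal (c + d n)" for n
  proof -
    have "(INF A\<in>\<F>. SUP x\<in>A. J x) < ereal (c + d n)" using c_def dpos[of n] by simp
    then show ?thesis by (simp add: INF_less_iff)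
  qed
  then obtain A where A: "\<And>n. A n \<in> \<F>" "\<And>n. (SUP x\<in>A n. J x) < ereal (c + d n)" by metis
  have Jle: "J x \<le> ereal (c + d n)" if "x \<in> A n" for x n
    using A(2)[of n] that by (metis SUP_upper less_imp_le order_trans)
  have Asub: "A n \<subseteq> sublevel J c'" for n
  proof
    fix x assume "x \<in> A n"
    then have "J x \<le> ereal (c + d n)" by (rule Jle)
    also have "\<dots> \<le> ereal c'" using dle[of n] by simp
    finally show "x \<in> sublevel J c'" by (simp add: sublevel_def)
  qed
  define B where "B = seq_limsup_set A"
  have BF: "B \<in> \<F>" unfolding B_def using F2 A(1) Asub by blast
  have Ble: "J x \<le> ereal c" if "x \<in> B" for x
  proof (rule ereal_le_epsilon2)
    fix e :: real assume e: "e > 0"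
    from that obtain r xs where r: "strict_mono r" "\<And>j. xs j \<in> A (r j)" "xs \<longlonglongrightarrow> x"
      unfolding B_def seq_limsup_set_def by blast
    have "(d \<circ> r) \<longlonglongrightarrow> 0" using LIMSEQ_subseq_LIMSEQ[OF dlim r(1)] .
    then have "eventually (\<lambda>j. (d \<circ> r) j < e) sequentially" using e by (rule order_tendstoD)
    then have ev: "eventually (\<lambda>j. xs j \<in> {y. J y \<le> ereal (c + e)}) sequentially"
    proof (rule eventually_mono)
      fix j assume "(d \<circ> r) j < e"
      then have "J (xs j) \<le> ereal (c + d (r j))" "ereal (c + d (r j)) \<le> ereal (c + e)"
        using Jle[OF r(2)[of j]] by auto
      then show "xs j \<in> {y. J y \<le> ereal (c + e)}" using order_trans by blast
    qed
    have cl: "closed {y. J y \<le> ereal (c + e)}" using J_lsc unfolding lsc_ereal_def by blast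
    have "x \<in> {y. J y \<le> ereal (c + e)}"
      by (rule Lim_in_closed_set[OF cl ev _ r(3)]) simp
    then show "J x \<le> ereal c + ereal e" by simp
  qed
  have "(SUP x\<in>B. J x) = ereal c"
    using geF[OF BF] Ble by (meson SUP_least antisym)
  then have "B \<inter> crit_set J \<eta> c \<noteq> {}" using part1 BF by blast
  then show ?thesis using part1 by blast
qed

end
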